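(* Let $\mathcal G$ be a competing content creation game with $\beta>0$ and $1\le K\le n$. For every $s=(s_1,\dots,s_n)\in\mathcal S$ and every $i\in[n]$, $$W(s)-W(s_{-i})\le c(\beta,K)^{-1}\,u_i(s_i;s_{-i}),$$ where $c(\beta,K)=\dfrac{(b+1)\log(b+K)}{(b+K)(\log(b+K)-\log K)}$ and $b=e^{1/\beta}-1$.
   Context: A competing content creation game has users $\mathcal X=\{x_1,\dots,x_m\}\subset\mathbb R^d$, players $i\in[n]$ with action sets $\mathcal S_i\subset\mathbb R^d$, relevance $\sigma:\mathbb R^d\times\mathbb R^d\to[0,1]$, noise parameter $\beta>0$, integer $1\le K\le n$; $\mathcal S=\prod_i\mathcal S_i$. For a finite multiset $S$ of strategies with $|S|\ge K$ and user $x_j$, $\mathcal T_j(S;K)$ is a sub-multiset of $K$ elements of $S$ with the largest $\sigma(\cdot,x_j)$ (ties broken uniformly at random); if $|S|=K-1$, $\mathcal T_j(S;K)=S\cup\{\bar s\}$ with a default item $\bar s$ satisfying $\sigma(\bar s,x)=0$ for all $x$. Let the noises $\varepsilon$ be i.i.d. Gumbel of location $-\beta\gamma$ and scale $\beta$ (CDF $t\mapsto\exp(-e^{-(t+\beta\gamma)/\beta})$, $\gamma$ the Euler–Mascheroni constant). User $j$ chooses the item of $\mathcal T_j$ maximizing $\sigma(\cdot,x_j)+\varepsilon$; $x_j\to s_i$ denotes that player $i$'s item is chosen. The welfare of a multiset $S$ is $W(S)=\sum_j\mathbb E[\max_{s\in\mathcal T_j(S;K)}\{\sigma(s,x_j)+\varepsilon_s\}]$;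 $W(s)$ is this for $S=\{s_1,\dots,s_n\}$ and $W(s_{-i})$ for the multiset of the other $n-1$ strategies. Player $i$'s utility is $u_i(s)=u_i(s_i;s_{-i})=\sum_j\mathbb E[\sigma(s_i,x_j)+\varepsilon_i\mid x_j\to s_i]\Pr[x_j\to s_i]$. *)

theory Defs
  imports "HOL-Probability.Probability"
begin

(* Gumbel distribution with location -beta*gamma and scale beta:
   CDF t |-> exp(-exp(-(t + beta*gamma)/beta)); we give it by its density. *)
definition gumbel_pdf :: "real \<Rightarrow> real \<Rightarrow> real" where
  "gumbel_pdf \<beta> t =
     (let z = (t + \<beta> * euler_mascheroni) / \<beta> in exp (- z - exp (- z)) / \<beta>)"

definition gumbel :: "real \<Rightarrow> real measure" where
  "gumbel \<beta> = density lborel (\<lambda>t. ennreal (gumbel_pdf \<beta> t))"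

definition noise :: "real \<Rightarrow> nat set \<Rightarrow> (nat \<Rightarrow> real) measure" where
  "noise \<beta> J = PiM J (\<lambda>_. gumbel \<beta>)"

(* Possible realisations of the top-K slate T_j for items indexed by the finite set I
   with relevances v (for the user under consideration); dflt is the index of the
   default item (not in I).  If |I| >= K: all K-subsets consisting of items with largest
   relevance; uniform choice among them = uniform tie breaking.  If |I| = K-1
   (the only other case that occurs): I together with the default item. *)
definition top_slates :: "nat \<Rightarrow> nat set \<Rightarrow> (nat \<Rightarrow> real) \<Rightarrow> nat \<Rightarrow> nat set set" where
  "top_slates K I v dflt =
     (if K \<le> card I then
        {A. A \<subseteq> I \<and> card A = K \<and> (\<forall>a\<in>A. \<forall>b\<in>I - A. v b \<le> v a)}
      else {insert dflt I})"

definition user_welfare :: "real \<Rightarrow> nat \<Rightarrow> nat set \<Rightarrow> (nat \<Rightarrow> real) \<Rightarrow> nat \<Rightarrow> real" where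
  "user_welfare \<beta> K I v dflt =
     measure_pmf.expectation (pmf_of_set (top_slates K I v dflt))
       (\<lambda>A. \<integral>\<omega>. Max ((\<lambda>t. v t + \<omega> t) ` A) \<partial>(noise \<beta> (insert dflt I)))"

definition chooses :: "nat set \<Rightarrow> (nat \<Rightarrow> real) \<Rightarrow> (nat \<Rightarrow> real) \<Rightarrow> nat \<Rightarrow> bool" where
  "chooses A v \<omega> i \<longleftrightarrow> i \<in> A \<and> (\<forall>t\<in>A - {i}. v t + \<omega> t < v i + \<omega> i)"

(* E[ sigma_i + eps_i | x_j -> s_i ] * Pr[x_j -> s_i] = E[ (sigma_i + eps_i) * 1{x_j -> s_i} ] *)
definition user_util :: "real \<Rightarrow> nat \<Rightarrow> nat set \<Rightarrow> (nat \<Rightarrow> real) \<Rightarrow> nat \<Rightarrow> nat \<Rightarrow> real" where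
  "user_util \<beta> K I v dflt i =
     measure_pmf.expectation (pmf_of_set (top_slates K I v dflt))
       (\<lambda>A. \<integral>\<omega>. (v i + \<omega> i) * (if chooses A v \<omega> i then 1 else 0)
              \<partial>(noise \<beta> (insert dflt I)))"

(* Game: m users x 0..x (m-1), n players 0..n-1 with strategies s 0..s (n-1);
   item index n is the default item with relevance 0. *)
definition relv :: "('x \<Rightarrow> 'x \<Rightarrow> real) \<Rightarrow> nat \<Rightarrow> (nat \<Rightarrow> 'x) \<Rightarrow> 'x \<Rightarrow> nat \<Rightarrow> real" where
  "relv \<sigma> n s xj t = (if t < n then \<sigma> (s t) xj else 0)"

(* welfare of the multiset {s k | k in I}, I subset of players *)
definition welfare :: "('x \<Rightarrow> 'x \<Rightarrow> real) \<Rightarrow> real \<Rightarrow> nat \<Rightarrow> nat \<Rightarrow> (nat \<Rightarrow> 'x) \<Rightarrow> nat \<Rightarrow> (nat \<Rightarrow> 'x) \<Rightarrow> nat set \<Rightarrow> real" where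
  "welfare \<sigma> \<beta> K m x n s I = (\<Sum>j<m. user_welfare \<beta> K I (relv \<sigma> n s (x j)) n)"

definition utility :: "('x \<Rightarrow> 'x \<Rightarrow> real) \<Rightarrow> real \<Rightarrow> nat \<Rightarrow> nat \<Rightarrow> (nat \<Rightarrow> 'x) \<Rightarrow> nat \<Rightarrow> (nat \<Rightarrow> 'x) \<Rightarrow> nat \<Rightarrow> real" where
  "utility \<sigma> \<beta> K m x n s i = (\<Sum>j<m. user_util \<beta> K {..<n} (relv \<sigma> n s (x j)) n i)"

definition c_const :: "real \<Rightarrow> nat \<Rightarrow> real" where
  "c_const \<beta> K = (let b = exp (1 / \<beta>) - 1 in
     (b + 1) * ln (b + real K) / ((b + real K) * (ln (b + real K) - ln (real K))))"

end

theory Submission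
  imports Defs "HOL-Real_Asymp.Real_Asymp"
begin

definition gF :: "real \<Rightarrow> real \<Rightarrow> real" where
  "gF \<beta> c = exp (- exp (- ((c + \<beta> * euler_mascheroni) / \<beta>)))"

lemma gpdf_alt: "gumbel_pdf \<beta> t = exp (- ((t + \<beta> * euler_mascheroni) / \<beta>)) * gF \<beta> t / \<beta>"
proof -
  have "exp (- z - exp (- z)) = exp (- z) * exp (- exp (- z))" for z :: real
    by (subst exp_add[symmetric]) simp
  then show ?thesis unfolding gF_def gumbel_pdf_def Let_def by simp
qed

lemma gF_deriv: assumes "\<beta> > 0" shows "(gF \<beta> has_real_derivative gumbel_pdf \<beta> x) (at x)"
proof -
  have d1: "((\<lambda>c. (c + \<beta> * euler_mascheroni) / \<beta>) has_real_derivative 1 / \<beta>) (at x)"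
    using assms by (auto intro!: derivative_eq_intros)
  have "((\<lambda>c. exp (- exp (- ((c + \<beta> * euler_mascheroni) / \<beta>)))) has_real_derivative
     exp (- exp (- ((x + \<beta> * euler_mascheroni) / \<beta>))) * (- (exp (- ((x + \<beta> * euler_mascheroni) / \<beta>)) * (- (1 / \<beta>))))) (at x)"
    by (intro derivative_intros d1) 
  then show ?thesis unfolding gpdf_alt gF_def[abs_def] by (simp add: mult_ac)
qed

lemma gF_bot: assumes "\<beta> > 0" shows "(gF \<beta> \<longlongrightarrow> 0) at_bot"
  unfolding gF_def using assms by real_asymp

lemma gF_top: assumes "\<beta> > 0" shows "(gF \<beta> \<longlongrightarrow> 1) at_top"
  unfolding gF_def using assms by real_asymp

lemma gpdf_nonneg: "\<beta> > 0 \<Longrightarrow> 0 \<le> gumbel_pdf \<beta> t"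
  unfolding gumbel_pdf_def Let_def by simp

lemma gpdf_meas[measurable]: "gumbel_pdf \<beta> \<in> borel_measurable borel"
  unfolding gumbel_pdf_def[abs_def] Let_def by measurable

lemma gumbel_atMost:
  assumes b: "\<beta> > 0"
  shows "emeasure (gumbel \<beta>) {..c} = ennreal (gF \<beta> c)"
proof -
  have "emeasure (gumbel \<beta>) {..c} = (\<integral>\<^sup>+x. ennreal (gumbel_pdf \<beta> x) * indicator {..c} x \<partial>lborel)"
    unfolding gumbel_def by (subst emeasure_density) auto
  also have "\<dots> = ennreal \<bar>-1\<bar> * (\<integral>\<^sup>+x. ennreal (gumbel_pdf \<beta> (0 + -1 * x)) * indicator {..c} (0 + -1 * x) \<partial>lborel)"
    by (rule nn_integral_real_affine) auto
  also have "\<dots> = (\<integral>\<^sup>+x. ennreal (gumbel_pdf \<beta> (- x)) * indicator {-c..} x \<partial>lborel)"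
    by (auto intro!: nn_integral_cong split: split_indicator)
  also have "\<dots> = ennreal (0 - (- gF \<beta> (- (-c))))"
  proof (rule nn_integral_FTC_atLeast)
    show "(\<lambda>x. gumbel_pdf \<beta> (- x)) \<in> borel_measurable borel" by measurable
    show "((\<lambda>y. - gF \<beta> (- y)) has_real_derivative gumbel_pdf \<beta> (- x)) (at x)" for x
      using DERIV_minus[OF DERIV_chain2[OF gF_deriv[OF b, of "-x"] DERIV_minus[OF DERIV_ident]]]
      by simp
    show "0 \<le> gumbel_pdf \<beta> (- x)" for x using gpdf_nonneg b by auto
    show "((\<lambda>y. - gF \<beta> (- y)) \<longlongrightarrow> 0) at_top"
      using tendsto_minus[OF filterlim_compose[OF gF_bot[OF b] filterlim_uminus_at_bot_at_top]] by simp
  qed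
  finally show ?thesis by simp
qed

lemma prob_space_gumbel: assumes b: "\<beta> > 0" shows "prob_space (gumbel \<beta>)"
proof
  have "(\<lambda>i. emeasure (gumbel \<beta>) {..real i}) \<longlonglongrightarrow> emeasure (gumbel \<beta>) (\<Union>i. {..real i})"
    by (rule Lim_emeasure_incseq) (auto simp: gumbel_def incseq_def)
  moreover have "(\<Union>i. {..real i}) = UNIV"
    by (auto intro: real_arch_simple)
  moreover have "(\<lambda>i. emeasure (gumbel \<beta>) {..real i}) \<longlonglongrightarrow> ennreal 1"
    unfolding gumbel_atMost[OF b]
    by (intro tendsto_ennrealI filterlim_compose[OF gF_top[OF b] filterlim_real_sequentially])
  ultimately have "emeasure (gumbel \<beta>) UNIV = 1" using LIMSEQ_unique by fastforce
  then show "emeasure (gumbel \<beta>) (space (gumbel \<beta>)) = 1" by (simp add: gumbel_def)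
qed

definition expM :: "real measure" where "expM = density lborel (exponential_density 1)"
definition psi :: "real \<Rightarrow> real \<Rightarrow> real" where "psi \<beta> u = - \<beta> * ln u - \<beta> * euler_mascheroni"

lemma prob_space_expM: "prob_space expM"
  unfolding expM_def by (rule prob_space_exponential_density) simp

interpretation expM: prob_space expM by (rule prob_space_expM)

lemma sets_expM[simp, measurable_cong]: "sets expM = sets borel"
  by (simp add: expM_def)

lemma space_expM[simp]: "space expM = UNIV"
  by (simp add: expM_def)

lemma expM_UNIV[simp]: "measure expM UNIV = 1"
  using expM.prob_space by simp

lemma psi_meas[measurable]: "psi \<beta> \<in> borel_measurable borel"
  unfolding psi_def[abs_def] by measurable

lemma expM_le_psi:
  assumes b: "\<beta> > 0"
  shows "emeasure expM {u. psi \<beta> u \<le> c} = ennreal (gF \<beta> c)"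
proof -
  define \<theta> where "\<theta> = exp (- ((c + \<beta> * euler_mascheroni) / \<beta>))"
  have th: "\<theta> > 0" by (simp add: \<theta>_def)
  have iff: "psi \<beta> u \<le> c \<longleftrightarrow> \<theta> \<le> u" if "u > 0" for u
  proof -
    have "psi \<beta> u \<le> c \<longleftrightarrow> - ((c + \<beta> * euler_mascheroni) / \<beta>) \<le> ln u"
      using b by (simp add: psi_def field_simps, linarith)
    also have "\<dots> \<longleftrightarrow> \<theta> \<le> u" using that by (simp add: ln_ge_iff \<theta>_def)
    finally show ?thesis .
  qed
  have "emeasure expM {u. psi \<beta> u \<le> c} =
      (\<integral>\<^sup>+u. ennreal (exponential_density 1 u) * indicator {u. psi \<beta> u \<le> c} u \<partial>lborel)"
    unfolding expM_def by (subst emeasure_density) auto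
  also have "\<dots> = (\<integral>\<^sup>+u. ennreal (exp (- u)) * indicator {\<theta>..} u \<partial>lborel)"
  proof (rule nn_integral_cong_AE)
    show "AE u in lborel. ennreal (exponential_density 1 u) * indicator {u. psi \<beta> u \<le> c} u =
        ennreal (exp (- u)) * indicator {\<theta>..} u"
      using AE_lborel_singleton[of 0]
    proof eventually_elim
      case (elim u)
      show ?case
      proof (cases "u < 0")
        case True then show ?thesis using th by (simp add: exponential_density_def indicator_def)
      next
        case False
        with elim have "u > 0" by simp
        then show ?thesis using iff[of u] by (simp add: exponential_density_def indicator_def)
      qed
    qed
  qed
  also have "\<dots> = ennreal (0 - (- exp (- \<theta>)))"
  proof (rule nn_integral_FTC_atLeast)
    show "(\<lambda>x::real. exp (- x)) \<in> borel_measurable borel"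
      by (rule borel_measurable_continuous_onI) (auto intro!: continuous_intros)
    show "((\<lambda>x. - exp (- x)) has_real_derivative exp (- x)) (at x)" for x
      by (auto intro!: derivative_eq_intros)
    show "0 \<le> exp (- x)" for x :: real by simp
    show "((\<lambda>x::real. - exp (- x)) \<longlongrightarrow> 0) at_top" by real_asymp
  qed
  finally show ?thesis by (simp add: gF_def \<theta>_def)
qed

lemma real_distribution_gumbel: "\<beta> > 0 \<Longrightarrow> real_distribution (gumbel \<beta>)"
  unfolding real_distribution_def real_distribution_axioms_def
  using prob_space_gumbel[of \<beta>] by (auto simp: gumbel_def)

lemma distr_psi:
  assumes b: "\<beta> > 0"
  shows "distr expM borel (psi \<beta>) = gumbel \<beta>"
proof (rule cdf_unique)
  show "real_distribution (distr expM borel (psi \<beta>))"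
    unfolding real_distribution_def real_distribution_axioms_def
    by (auto intro!: expM.prob_space_distr prob_space_expM)
  show "real_distribution (gumbel \<beta>)" using b by (rule real_distribution_gumbel)
  show "cdf (distr expM borel (psi \<beta>)) = cdf (gumbel \<beta>)"
  proof
    fix c
    have "cdf (distr expM borel (psi \<beta>)) c = measure expM {u. psi \<beta> u \<le> c}"
      unfolding cdf_def2 by (subst measure_distr) (auto simp: vimage_def)
    also have "\<dots> = gF \<beta> c" using expM_le_psi[OF b] by (simp add: measure_def gF_def)
    also have "\<dots> = cdf (gumbel \<beta>) c"
      unfolding cdf_def2 using gumbel_atMost[OF b] by (simp add: measure_def gF_def)
    finally show "cdf (distr expM borel (psi \<beta>)) c = cdf (gumbel \<beta>) c" .
  qed
qed

lemma expM_powr: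
  assumes s: "s > 0"
  shows "has_bochner_integral expM (\<lambda>u. u powr (s - 1)) (Gamma s)"
proof (rule has_bochner_integral_nn_integral)
  show "(\<lambda>u. u powr (s - 1)) \<in> borel_measurable expM" by simp
  show "AE x in expM. 0 \<le> x powr (s - 1)" by simp
  show "0 \<le> Gamma s" using s by (simp add: less_imp_le)
  have "(\<integral>\<^sup>+u. ennreal (u powr (s - 1)) \<partial>expM) =
      (\<integral>\<^sup>+u. ennreal (exponential_density 1 u) * ennreal (u powr (s - 1)) \<partial>lborel)"
    unfolding expM_def by (subst nn_integral_density) auto
  also have "\<dots> = (\<integral>\<^sup>+t. ennreal (indicator {0..} t * t powr (s - 1) / exp t) \<partial>lborel)"
    by (intro nn_integral_cong)
       (auto simp: exponential_density_def indicator_def ennreal_mult'[symmetric] exp_minus field_simps)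
  also have "\<dots> = ennreal (Gamma s)"
    using Gamma_conv_nn_integral_real[OF s] by simp
  finally show "(\<integral>\<^sup>+u. ennreal (u powr (s - 1)) \<partial>expM) = ennreal (Gamma s)" .
qed

lemma AE_expM_pos: "AE u in expM. u > 0"
proof -
  have "AE u in lborel. 0 < exponential_density 1 u \<longrightarrow> u > 0"
    using AE_lborel_singleton[of 0] by eventually_elim (auto simp: exponential_density_def)
  then show ?thesis unfolding expM_def by (subst AE_density) auto
qed

lemma expM_ln_integrable: "integrable expM ln"
proof -
  have i1: "integrable expM (\<lambda>u. u powr (2 - 1))" using expM_powr[of 2] by (auto simp: has_bochner_integral_iff)
  have i2: "integrable expM (\<lambda>u. u powr (1/2 - 1))" using expM_powr[of "1/2"] by (auto simp: has_bochner_integral_iff)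
  have "integrable expM (\<lambda>u. u powr (2 - 1) + 2 * u powr (1/2 - 1))"
    using i1 i2 by auto
  then show ?thesis
  proof (rule Bochner_Integration.integrable_bound)
    show "ln \<in> borel_measurable expM" by simp
    show "AE x in expM. norm (ln x) \<le> norm (x powr (2 - 1) + 2 * x powr (1 / 2 - 1))"
      using AE_expM_pos
    proof eventually_elim
      case (elim u)
      have p1: "u powr (2 - 1) = u" using elim by simp
      have p2: "u powr (1 / 2 - 1) = u powr (-(1/2))" by simp
      have "ln (u powr (-(1/2))) \<le> u powr (-(1/2)) - 1" using elim by (intro ln_le_minus_one) simp
      then have a: "- ln u \<le> 2 * u powr (-(1/2))" using elim by (simp add: ln_powr)
      have b: "ln u \<le> u" using ln_le_minus_one[OF elim] by simp
      have c: "0 \<le> u powr (-(1/2))" by simp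
      have "\<bar>ln u\<bar> \<le> u + 2 * u powr (-(1/2))" unfolding abs_le_iff using a b c elim by linarith
      moreover have "0 \<le> u + 2 * u powr (-(1/2))" using c elim by simp
      ultimately show ?case unfolding p1 p2 by simp
    qed
  qed
qed

lemma expM_ln_le: "integral\<^sup>L expM ln \<le> - euler_mascheroni"
proof -
  define I where "I = integral\<^sup>L expM ln"
  have bound: "I \<le> (Gamma (1 + h) - Gamma 1) / h" if h: "h > 0" for h :: real
  proof -
    have hb: "has_bochner_integral expM (\<lambda>u. u powr (1 + h - 1)) (Gamma (1 + h))"
      using h by (intro expM_powr) simp
    have "integral\<^sup>L expM (\<lambda>u. 1 + h * ln u) \<le> integral\<^sup>L expM (\<lambda>u. u powr (1 + h - 1))"
    proof (rule integral_mono_AE)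
      show "integrable expM (\<lambda>u. 1 + h * ln u)"
        using expM_ln_integrable prob_space_expM by (auto intro!: expM.integrable_const)
      show "integrable expM (\<lambda>u. u powr (1 + h - 1))" using hb by (auto simp: has_bochner_integral_iff)
      show "AE x in expM. 1 + h * ln x \<le> x powr (1 + h - 1)"
        using AE_expM_pos
      proof eventually_elim
        case (elim u)
        then show ?case using exp_ge_add_one_self[of "h * ln u"] by (simp add: powr_def mult.commute)
      qed
    qed
    also have "\<dots> = Gamma (1 + h)" using hb by (simp add: has_bochner_integral_iff)
    finally have "1 + h * I \<le> Gamma (1 + h)"
      using expM_ln_integrable prob_space_expM
      by (simp add: I_def expM.prob_space expM.integrable_const)
    then show ?thesis using h by (simp add: field_simps)
  qed
  have "(Gamma has_field_derivative Gamma 1 * Digamma 1) (at (1::real))"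
    by (rule has_field_derivative_Gamma) (auto simp: nonpos_Ints_def)
  then have "((\<lambda>h. (Gamma (1 + h) - Gamma 1) / h) \<longlongrightarrow> - euler_mascheroni) (at (0::real))"
    by (simp add: DERIV_def)
  then have lim: "((\<lambda>h. (Gamma (1 + h) - Gamma 1) / h) \<longlongrightarrow> - euler_mascheroni) (at_right (0::real))"
    by (rule filterlim_mono) (auto simp: at_le)
  have "I \<le> - euler_mascheroni"
    using lim
  proof (rule tendsto_lowerbound)
    show "\<forall>\<^sub>F h in at_right 0. I \<le> (Gamma (1 + h) - Gamma 1) / h"
      using eventually_at_right_less[of "0::real"] by eventually_elim (rule bound)
  qed simp
  then show ?thesis by (simp add: I_def)
qed

lemma gumbel_mean:
  assumes b: "\<beta> > 0"
  shows "integrable (gumbel \<beta>) (\<lambda>x. x)" "integral\<^sup>L (gumbel \<beta>) (\<lambda>x. x) \<ge> 0"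
proof -
  have ip: "integrable expM (psi \<beta>)"
    unfolding psi_def using expM_ln_integrable prob_space_expM
    by (auto intro!: expM.integrable_const)
  show "integrable (gumbel \<beta>) (\<lambda>x. x)"
    unfolding distr_psi[OF b, symmetric] using ip by (subst integrable_distr_eq) auto
  have "integral\<^sup>L (gumbel \<beta>) (\<lambda>x. x) = integral\<^sup>L expM (psi \<beta>)"
    unfolding distr_psi[OF b, symmetric] by (subst integral_distr) auto
  also have "\<dots> = - \<beta> * integral\<^sup>L expM ln - \<beta> * euler_mascheroni"
    unfolding psi_def[abs_def] using expM_ln_integrable prob_space_expM
    by (simp add: expM.prob_space expM.integrable_const)
  also have "\<dots> \<ge> 0"
    using expM_ln_le b mult_left_mono[OF expM_ln_le, of \<beta>] by simp
  finally show "integral\<^sup>L (gumbel \<beta>) (\<lambda>x. x) \<ge> 0" .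
qed

lemma sets_gumbel[simp, measurable_cong]: "sets (gumbel \<beta>) = sets borel"
  by (simp add: gumbel_def)

lemma space_gumbel[simp]: "space (gumbel \<beta>) = UNIV"
  by (simp add: gumbel_def)

lemma gumbel_singleton: "emeasure (gumbel \<beta>) {c} = 0"
proof -
  have ae: "AE x in lborel. ennreal (gumbel_pdf \<beta> x) * indicator {c} x = 0"
    using AE_lborel_singleton[of c] by eventually_elim simp
  have "(\<integral>\<^sup>+x. ennreal (gumbel_pdf \<beta> x) * indicator {c} x \<partial>lborel) = 0"
    by (subst nn_integral_cong_AE[OF ae]) simp
  then show ?thesis unfolding gumbel_def by (subst emeasure_density) auto
qed

lemma gumbel_lessThan:
  assumes b: "\<beta> > 0"
  shows "emeasure (gumbel \<beta>) {..<c} = ennreal (gF \<beta> c)"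
proof -
  interpret G: prob_space "gumbel \<beta>" using b by (rule prob_space_gumbel)
  have "emeasure (gumbel \<beta>) {..c} = emeasure (gumbel \<beta>) ({..<c} \<union> {c})"
    by (intro arg_cong2[where f=emeasure]) auto
  also have "\<dots> = emeasure (gumbel \<beta>) {..<c} + emeasure (gumbel \<beta>) {c}"
    by (intro plus_emeasure[symmetric]) auto
  finally show ?thesis using gumbel_atMost[OF b, of c] gumbel_singleton by simp
qed

lemma noise_comp: "t \<in> J \<Longrightarrow> (\<lambda>\<omega>. \<omega> t) \<in> borel_measurable (noise \<beta> J)"
proof -
  assume "t \<in> J"
  then have "(\<lambda>\<omega>. \<omega> t) \<in> measurable (PiM J (\<lambda>_. gumbel \<beta>)) (gumbel \<beta>)"
    by (rule measurable_component_singleton)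
  then show ?thesis unfolding noise_def using measurable_cong_sets[OF refl sets_gumbel[of \<beta>]] by auto
qed

lemma chooses_meas:
  assumes "finite A" "A \<subseteq> J"
  shows "Measurable.pred (noise \<beta> J) (\<lambda>\<omega>. chooses A v \<omega> i)"
proof (cases "i \<in> A")
  case True
  have "Measurable.pred (noise \<beta> J) (\<lambda>\<omega>. v t + \<omega> t < v i + \<omega> i)" if "t \<in> A - {i}" for t
  proof -
    have tJ: "t \<in> J" and iJ: "i \<in> J" using that True assms by auto
    note [measurable] = noise_comp[OF tJ, of \<beta>] noise_comp[OF iJ, of \<beta>]
    show ?thesis by measurable
  qed
  then show ?thesis unfolding chooses_def using assms
    by (intro pred_intros_logic pred_intros_finite) auto
qed (simp add: chooses_def)

lemma box_measure:
  assumes b: "\<beta> > 0" and fin: "finite R" and BR: "B \<subseteq> R"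
  shows "measure (PiM R (\<lambda>_. gumbel \<beta>)) {y \<in> space (PiM R (\<lambda>_. gumbel \<beta>)). \<forall>t\<in>B. y t < c t}
       = (\<Prod>t\<in>B. gF \<beta> (c t))"
proof -
  have fB: "finite B" using fin BR finite_subset by auto
  have eq: "{y \<in> space (PiM R (\<lambda>_. gumbel \<beta>)). \<forall>t\<in>B. y t < c t} =
      prod_emb R (\<lambda>_. gumbel \<beta>) B (PiE B (\<lambda>t. {..<c t}))"
    using BR by (auto simp: prod_emb_def space_PiM PiE_iff extensional_def)
  have "emeasure (PiM R (\<lambda>_. gumbel \<beta>)) (prod_emb R (\<lambda>_. gumbel \<beta>) B (PiE B (\<lambda>t. {..<c t})))
      = (\<Prod>t\<in>B. emeasure (gumbel \<beta>) {..<c t})"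
    using BR fB b by (intro emeasure_PiM_emb prob_space_gumbel) auto
  also have "\<dots> = (\<Prod>t\<in>B. ennreal (gF \<beta> (c t)))" using gumbel_lessThan[OF b] by simp
  also have "\<dots> = ennreal (\<Prod>t\<in>B. gF \<beta> (c t))"
    by (rule prod_ennreal) (simp add: gF_def)
  finally show ?thesis unfolding eq measure_def by (simp add: gF_def prod_nonneg)
qed

lemma key_alg:
  fixes v :: "nat \<Rightarrow> real" and A :: "nat set"
  assumes b: "\<beta> > 0" and fin: "finite A" and iA: "i \<in> A"
  defines "S \<equiv> (\<Sum>t\<in>A. exp (v t / \<beta>))"
  shows "gumbel_pdf \<beta> e * (\<Prod>t\<in>A-{i}. gF \<beta> (v i + e - v t))
       = exp (v i / \<beta>) / S * gumbel_pdf \<beta> (e - (\<beta> * ln S - v i))"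
proof -
  define q where "q = exp (- ((e + \<beta> * euler_mascheroni) / \<beta>))"
  define a where "a = exp (v i / \<beta>)"
  have a0: "a > 0" by (simp add: a_def)
  have q0: "q > 0" by (simp add: q_def)
  have Ssplit: "S = a + (\<Sum>t\<in>A-{i}. exp (v t / \<beta>))"
    unfolding S_def a_def using fin iA by (simp add: sum.remove)
  have S0: "S > 0" unfolding Ssplit using a0 by (auto intro!: add_pos_nonneg sum_nonneg)
  have h1: "gF \<beta> (v i + e - v t) = exp (- (q * (exp (v t / \<beta>) / a)))" for t
  proof -
    have "- ((v i + e - v t + \<beta> * euler_mascheroni) / \<beta>) = - ((e + \<beta> * euler_mascheroni) / \<beta>) + (v t / \<beta> - v i / \<beta>)"
      using b by (simp add: field_simps)
    then have "exp (- ((v i + e - v t + \<beta> * euler_mascheroni) / \<beta>)) = exp (- ((e + \<beta> * euler_mascheroni) / \<beta>) + (v t / \<beta> - v i / \<beta>))"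
      by (rule arg_cong[where f=exp])
    also have "\<dots> = q * (exp (v t / \<beta>) / a)"
      by (simp only: q_def a_def exp_add exp_diff)
    finally have "exp (- ((v i + e - v t + \<beta> * euler_mascheroni) / \<beta>)) = q * (exp (v t / \<beta>) / a)" .
    then show ?thesis by (simp add: gF_def)
  qed
  have h2: "(\<Prod>t\<in>A-{i}. gF \<beta> (v i + e - v t)) = exp (- (q * ((S - a) / a)))"
  proof -
    have "(\<Prod>t\<in>A-{i}. gF \<beta> (v i + e - v t)) = (\<Prod>t\<in>A-{i}. exp (- (q * (exp (v t / \<beta>) / a))))"
      by (simp add: h1)
    also have "\<dots> = exp (\<Sum>t\<in>A-{i}. - (q * (exp (v t / \<beta>) / a)))"
      using fin by (simp add: exp_sum)
    also have "(\<Sum>t\<in>A-{i}. - (q * (exp (v t / \<beta>) / a))) = - (q * ((S - a) / a))"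
      unfolding Ssplit by (simp add: sum_negf sum_distrib_left sum_divide_distrib[symmetric])
    finally show ?thesis .
  qed
  have h3: "gumbel_pdf \<beta> e = q * exp (- q) / \<beta>"
    unfolding gpdf_alt by (simp add: gF_def q_def)
  have h4: "gumbel_pdf \<beta> (e - (\<beta> * ln S - v i)) = q * (S / a) * exp (- (q * (S / a))) / \<beta>"
  proof -
    have "- ((e - (\<beta> * ln S - v i) + \<beta> * euler_mascheroni) / \<beta>) = - ((e + \<beta> * euler_mascheroni) / \<beta>) + (ln S - v i / \<beta>)"
      using b by (simp add: field_simps)
    then have "exp (- ((e - (\<beta> * ln S - v i) + \<beta> * euler_mascheroni) / \<beta>)) = exp (- ((e + \<beta> * euler_mascheroni) / \<beta>) + (ln S - v i / \<beta>))"
      by (rule arg_cong[where f=exp])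
    also have "\<dots> = q * (exp (ln S) / a)"
      by (simp only: q_def a_def exp_add exp_diff)
    finally have "exp (- ((e - (\<beta> * ln S - v i) + \<beta> * euler_mascheroni) / \<beta>)) = q * (S / a)"
      using S0 by simp
    then show ?thesis unfolding gpdf_alt by (simp add: gF_def)
  qed
  have "exp (- q) * exp (- (q * ((S - a) / a))) = exp (- (q * (S / a)))"
  proof -
    have "- q + - (q * ((S - a) / a)) = - (q * (S / a))" using a0 by (simp add: field_simps)
    then show ?thesis by (metis exp_add)
  qed
  then show ?thesis unfolding h2 h3 h4 a_def[symmetric] using a0 S0
    by (simp add: field_simps)
qed

lemma gF_meas[measurable]: "gF \<beta> \<in> borel_measurable borel"
  unfolding gF_def[abs_def] by measurable

lemma prod_gumbel: "\<beta> > 0 \<Longrightarrow> product_prob_space (\<lambda>_::nat. gumbel \<beta>)"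
  by (simp add: product_prob_space_def product_prob_space_axioms_def product_sigma_finite_def
      prob_space_gumbel prob_space_imp_sigma_finite)

lemma integrable_noise_comp:
  fixes g :: "real \<Rightarrow> real"
  assumes b: "\<beta> > 0" and iJ: "i \<in> J" and g[measurable]: "g \<in> borel_measurable borel"
    and gi: "integrable (gumbel \<beta>) g"
  shows "integrable (noise \<beta> J) (\<lambda>\<omega>. g (\<omega> i))"
proof -
  have d: "distr (PiM J (\<lambda>_. gumbel \<beta>)) (gumbel \<beta>) (\<lambda>\<omega>. \<omega> i) = gumbel \<beta>"
    using b iJ by (intro distr_PiM_component prob_space_gumbel) auto
  have m: "(\<lambda>\<omega>. \<omega> i) \<in> measurable (PiM J (\<lambda>_. gumbel \<beta>)) (gumbel \<beta>)"
    using iJ by (rule measurable_component_singleton)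
  have gd: "integrable (distr (PiM J (\<lambda>_. gumbel \<beta>)) (gumbel \<beta>) (\<lambda>\<omega>. \<omega> i)) g"
    unfolding d by (rule gi)
  from integrable_distr[OF m gd] show ?thesis unfolding noise_def by simp
qed

lemma E2:
  fixes v :: "nat \<Rightarrow> real" and h :: "real \<Rightarrow> real"
  assumes b: "\<beta> > 0" and finJ: "finite J" and iA: "i \<in> A" and AJ: "A \<subseteq> J"
    and hm[measurable]: "h \<in> borel_measurable borel"
    and hi: "integrable (gumbel \<beta>) (\<lambda>e. h (v i + e))"
  defines "S \<equiv> (\<Sum>t\<in>A. exp (v t / \<beta>))"
  shows "(\<integral>\<omega>. h (v i + \<omega> i) * (if chooses A v \<omega> i then 1 else 0) \<partial>noise \<beta> J)
       = exp (v i / \<beta>) / S * (\<integral>e. h (\<beta> * ln S + e) \<partial>gumbel \<beta>)"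
proof -
  interpret P: product_prob_space "\<lambda>_::nat. gumbel \<beta>" UNIV using prod_gumbel[OF b] .
  define R where "R = J - {i}"
  have iJ: "i \<in> J" using iA AJ by auto
  have J: "J = {i} \<union> R" using iJ by (auto simp: R_def)
  have finR: "finite R" using finJ by (simp add: R_def)
  have finA: "finite A" using finJ AJ finite_subset by auto
  have AR: "A - {i} \<subseteq> R" using AJ by (auto simp: R_def)
  define f where "f \<omega> = h (v i + \<omega> i) * (if chooses A v \<omega> i then 1 else 0)" for \<omega> :: "nat \<Rightarrow> real"
  have [measurable]: "Measurable.pred (noise \<beta> J) (\<lambda>\<omega>. chooses A v \<omega> i)"
    using finA AJ by (rule chooses_meas)
  have fm: "f \<in> borel_measurable (noise \<beta> J)"
  proof -
    note [measurable] = noise_comp[OF iJ, of \<beta>]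
    show ?thesis unfolding f_def by measurable
  qed
  have "integrable (noise \<beta> J) (\<lambda>\<omega>. h (v i + \<omega> i))"
    using b iJ _ hi by (rule integrable_noise_comp) simp
  then have fi: "integrable (noise \<beta> J) f"
  proof (rule Bochner_Integration.integrable_bound)
    show "f \<in> borel_measurable (noise \<beta> J)" by (rule fm)
    show "AE x in noise \<beta> J. norm (f x) \<le> norm (h (v i + x i))"
      by (auto simp: f_def)
  qed
  have "integral\<^sup>L (noise \<beta> J) f =
      (\<integral>x. (\<integral>y. f (merge {i} R (x, y)) \<partial>PiM R (\<lambda>_. gumbel \<beta>)) \<partial>PiM {i} (\<lambda>_. gumbel \<beta>))"
    using fi unfolding noise_def J using finR by (intro P.product_integral_fold) (auto simp: R_def)
  also have "\<dots> = (\<integral>x. h (v i + x i) * (\<Prod>t\<in>A-{i}. gF \<beta> (v i + x i - v t)) \<partial>PiM {i} (\<lambda>_. gumbel \<beta>))"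
  proof (rule Bochner_Integration.integral_cong[OF refl])
    fix x assume x: "x \<in> space (PiM {i} (\<lambda>_. gumbel \<beta>))"
    define B where "B = {y \<in> space (PiM R (\<lambda>_. gumbel \<beta>)). \<forall>t\<in>A-{i}. y t < v i + x i - v t}"
    have "(\<integral>y. f (merge {i} R (x, y)) \<partial>PiM R (\<lambda>_. gumbel \<beta>)) =
        (\<integral>y. h (v i + x i) * indicator B y \<partial>PiM R (\<lambda>_. gumbel \<beta>))"
    proof (rule Bochner_Integration.integral_cong[OF refl])
      fix y assume y: "y \<in> space (PiM R (\<lambda>_. gumbel \<beta>))"
      have mi: "merge {i} R (x, y) i = x i" by (simp add: merge_def)
      have mt: "merge {i} R (x, y) t = y t" if "t \<in> A - {i}" for t
        using that AR by (auto simp: merge_def)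
      have "chooses A v (merge {i} R (x, y)) i \<longleftrightarrow> y \<in> B"
        using y iA by (auto simp: chooses_def B_def mi mt algebra_simps)
      then show "f (merge {i} R (x, y)) = h (v i + x i) * indicator B y"
        by (simp add: f_def mi indicator_def)
    qed
    also have "\<dots> = h (v i + x i) * measure (PiM R (\<lambda>_. gumbel \<beta>)) B"
      by (simp add: B_def Int_absorb2 Collect_subset)
    also have "measure (PiM R (\<lambda>_. gumbel \<beta>)) B = (\<Prod>t\<in>A-{i}. gF \<beta> (v i + x i - v t))"
      unfolding B_def using b finR AR by (rule box_measure)
    finally show "(\<integral>y. f (merge {i} R (x, y)) \<partial>PiM R (\<lambda>_. gumbel \<beta>)) =
        h (v i + x i) * (\<Prod>t\<in>A-{i}. gF \<beta> (v i + x i - v t))" .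
  qed
  also have "\<dots> = (\<integral>e. h (v i + e) * (\<Prod>t\<in>A-{i}. gF \<beta> (v i + e - v t)) \<partial>gumbel \<beta>)"
    by (rule P.product_integral_singleton) measurable
  also have "\<dots> = (\<integral>e. gumbel_pdf \<beta> e * (h (v i + e) * (\<Prod>t\<in>A-{i}. gF \<beta> (v i + e - v t))) \<partial>lborel)"
    unfolding gumbel_def using b
    by (subst integral_density) (auto simp: gpdf_nonneg)
  also have "\<dots> = (\<integral>e. exp (v i / \<beta>) / S * (gumbel_pdf \<beta> (e - (\<beta> * ln S - v i)) * h (v i + e)) \<partial>lborel)"
  proof (rule Bochner_Integration.integral_cong[OF refl])
    fix e
    show "gumbel_pdf \<beta> e * (h (v i + e) * (\<Prod>t\<in>A-{i}. gF \<beta> (v i + e - v t))) =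
        exp (v i / \<beta>) / S * (gumbel_pdf \<beta> (e - (\<beta> * ln S - v i)) * h (v i + e))"
    proof -
      have K: "gumbel_pdf \<beta> e * (\<Prod>t\<in>A-{i}. gF \<beta> (v i + e - v t)) =
          exp (v i / \<beta>) / S * gumbel_pdf \<beta> (e - (\<beta> * ln S - v i))"
        using key_alg[OF b finA iA, where v=v and e=e] unfolding S_def .
      have "gumbel_pdf \<beta> e * (h (v i + e) * (\<Prod>t\<in>A-{i}. gF \<beta> (v i + e - v t))) =
          h (v i + e) * (gumbel_pdf \<beta> e * (\<Prod>t\<in>A-{i}. gF \<beta> (v i + e - v t)))"
        by (simp only: mult_ac)
      also have "\<dots> = h (v i + e) * (exp (v i / \<beta>) / S * gumbel_pdf \<beta> (e - (\<beta> * ln S - v i)))"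
        by (simp only: K)
      finally show ?thesis by (simp only: mult_ac)
    qed
  qed
  also have "\<dots> = exp (v i / \<beta>) / S * (\<integral>e. gumbel_pdf \<beta> (e - (\<beta> * ln S - v i)) * h (v i + e) \<partial>lborel)"
    by simp
  also have "(\<integral>e. gumbel_pdf \<beta> (e - (\<beta> * ln S - v i)) * h (v i + e) \<partial>lborel) =
      \<bar>1\<bar> *\<^sub>R (\<integral>x. gumbel_pdf \<beta> (((\<beta> * ln S - v i) + 1 * x) - (\<beta> * ln S - v i)) * h (v i + ((\<beta> * ln S - v i) + 1 * x)) \<partial>lborel)"
    by (rule lborel_integral_real_affine) simp
  also have "\<dots> = (\<integral>x. gumbel_pdf \<beta> x * h (\<beta> * ln S + x) \<partial>lborel)"
    by (simp add: algebra_simps)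
  also have "\<dots> = (\<integral>x. h (\<beta> * ln S + x) \<partial>gumbel \<beta>)"
    unfolding gumbel_def using b
    by (subst integral_density) (auto simp: gpdf_nonneg)
  finally show ?thesis unfolding f_def .
qed

lemma gumbel_UNIV: "\<beta> > 0 \<Longrightarrow> measure (gumbel \<beta>) UNIV = 1"
  using prob_space.prob_space[OF prob_space_gumbel] by simp

lemma gumbel_shift_int:
  assumes b: "\<beta> > 0"
  shows "integrable (gumbel \<beta>) (\<lambda>e. c + e)" "(\<integral>e. c + e \<partial>gumbel \<beta>) = c + (\<integral>e. e \<partial>gumbel \<beta>)"
proof -
  interpret G: prob_space "gumbel \<beta>" using b by (rule prob_space_gumbel)
  show "integrable (gumbel \<beta>) (\<lambda>e. c + e)" using gumbel_mean(1)[OF b] by simp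
  show "(\<integral>e. c + e \<partial>gumbel \<beta>) = c + (\<integral>e. e \<partial>gumbel \<beta>)"
    using gumbel_mean(1)[OF b] by (simp add: gumbel_UNIV[OF b])
qed

lemma prob_space_noise: "\<beta> > 0 \<Longrightarrow> prob_space (noise \<beta> J)"
  unfolding noise_def by (intro prob_space_PiM prob_space_gumbel)

lemma choose_prob:
  fixes v :: "nat \<Rightarrow> real"
  assumes b: "\<beta> > 0" and finJ: "finite J" and kA: "k \<in> A" and AJ: "A \<subseteq> J"
  shows "measure (noise \<beta> J) {\<omega> \<in> space (noise \<beta> J). chooses A v \<omega> k} = exp (v k / \<beta>) / (\<Sum>t\<in>A. exp (v t / \<beta>))"
proof -
  interpret G: prob_space "gumbel \<beta>" using b by (rule prob_space_gumbel)
  have finA: "finite A" using finJ AJ finite_subset by auto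
  have "(\<integral>\<omega>. (\<lambda>_. 1::real) (v k + \<omega> k) * (if chooses A v \<omega> k then 1 else 0) \<partial>noise \<beta> J)
      = exp (v k / \<beta>) / (\<Sum>t\<in>A. exp (v t / \<beta>)) * (\<integral>e. (\<lambda>_. 1::real) (\<beta> * ln (\<Sum>t\<in>A. exp (v t / \<beta>)) + e) \<partial>gumbel \<beta>)"
    by (rule E2[OF b finJ kA AJ]) auto
  moreover have "(\<integral>\<omega>. (\<lambda>_. 1::real) (v k + \<omega> k) * (if chooses A v \<omega> k then 1 else 0) \<partial>noise \<beta> J) =
      (\<integral>\<omega>. indicator {\<omega> \<in> space (noise \<beta> J). chooses A v \<omega> k} \<omega> \<partial>noise \<beta> J)"
    by (rule Bochner_Integration.integral_cong) (auto simp: indicator_def)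
  ultimately show ?thesis by (simp add: gumbel_UNIV[OF b] Int_absorb2 Collect_subset)
qed

lemma E1:
  fixes v :: "nat \<Rightarrow> real"
  assumes b: "\<beta> > 0" and finJ: "finite J" and AJ: "A \<subseteq> J" and Ane: "A \<noteq> {}"
  defines "S \<equiv> (\<Sum>t\<in>A. exp (v t / \<beta>))"
  shows "(\<integral>\<omega>. Max ((\<lambda>t. v t + \<omega> t) ` A) \<partial>noise \<beta> J) = \<beta> * ln S + (\<integral>e. e \<partial>gumbel \<beta>)"
proof -
  interpret N: prob_space "noise \<beta> J" using b by (rule prob_space_noise)
  have finA: "finite A" using finJ AJ finite_subset by auto
  have S0: "S > 0" unfolding S_def using finA Ane by (intro sum_pos) auto
  define C where "C k = {\<omega> \<in> space (noise \<beta> J). chooses A v \<omega> k}" for k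
  have Csets: "C k \<in> sets (noise \<beta> J)" for k
  proof -
    have [measurable]: "Measurable.pred (noise \<beta> J) (\<lambda>\<omega>. chooses A v \<omega> k)"
      using finA AJ by (rule chooses_meas)
    show ?thesis unfolding C_def by measurable
  qed
  have pk: "measure (noise \<beta> J) (C k) = exp (v k / \<beta>) / S" if "k \<in> A" for k
    unfolding C_def S_def using choose_prob[OF b finJ that AJ] .
  have disj: "disjoint_family_on C A"
    unfolding disjoint_family_on_def
  proof (intro ballI impI)
    fix m n assume mn: "m \<in> A" "n \<in> A" "m \<noteq> n"
    show "C m \<inter> C n = {}"
    proof (rule ccontr)
      assume "C m \<inter> C n \<noteq> {}"
      then obtain \<omega> where "chooses A v \<omega> m" "chooses A v \<omega> n" by (auto simp: C_def)
      then have "v n + \<omega> n < v m + \<omega> m" "v m + \<omega> m < v n + \<omega> n"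
        using mn unfolding chooses_def by auto
      then show False by simp
    qed
  qed
  have "measure (noise \<beta> J) (\<Union>k\<in>A. C k) = (\<Sum>k\<in>A. measure (noise \<beta> J) (C k))"
    using finA Csets disj by (intro N.finite_measure_finite_Union) auto
  also have "\<dots> = (\<Sum>k\<in>A. exp (v k / \<beta>) / S)" using pk by simp
  also have "\<dots> = 1" using S0 by (simp add: sum_divide_distrib[symmetric] S_def)
  finally have "AE \<omega> in noise \<beta> J. \<omega> \<in> (\<Union>k\<in>A. C k)" by (rule N.AE_prob_1)
  then have ae: "AE \<omega> in noise \<beta> J. Max ((\<lambda>t. v t + \<omega> t) ` A) =
      (\<Sum>k\<in>A. (v k + \<omega> k) * (if chooses A v \<omega> k then 1 else 0))"
  proof eventually_elim
    case (elim \<omega>)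
    then obtain k0 where k0: "k0 \<in> A" "chooses A v \<omega> k0" by (auto simp: C_def)
    have ch: "chooses A v \<omega> k \<longleftrightarrow> k = k0" if "k \<in> A" for k
    proof
      assume ck: "chooses A v \<omega> k"
      show "k = k0"
      proof (rule ccontr)
        assume "k \<noteq> k0"
        then have "v k0 + \<omega> k0 < v k + \<omega> k" "v k + \<omega> k < v k0 + \<omega> k0"
          using ck k0 that unfolding chooses_def by auto
        then show False by simp
      qed
    qed (use k0 in simp)
    have "Max ((\<lambda>t. v t + \<omega> t) ` A) = v k0 + \<omega> k0"
    proof (rule Max_eqI)
      show "finite ((\<lambda>t. v t + \<omega> t) ` A)" using finA by simp
      show "y \<le> v k0 + \<omega> k0" if yA: "y \<in> (\<lambda>t. v t + \<omega> t) ` A" for y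
      proof -
        obtain t where t: "t \<in> A" "y = v t + \<omega> t" using yA by auto
        show ?thesis
        proof (cases "t = k0")
          case False
          then have "v t + \<omega> t < v k0 + \<omega> k0" using k0 t unfolding chooses_def by auto
          then show ?thesis using t by simp
        qed (use t in simp)
      qed
      show "v k0 + \<omega> k0 \<in> (\<lambda>t. v t + \<omega> t) ` A" using k0 by simp
    qed
    moreover have "(\<Sum>k\<in>A. (v k + \<omega> k) * (if chooses A v \<omega> k then 1 else 0)) =
        (\<Sum>k\<in>A. if k = k0 then v k + \<omega> k else 0)"
      by (rule sum.cong) (auto simp: ch)
    moreover have "\<dots> = v k0 + \<omega> k0" using finA k0 by simp
    ultimately show ?case by simp
  qed
  have intk: "integrable (noise \<beta> J) (\<lambda>\<omega>. (v k + \<omega> k) * (if chooses A v \<omega> k then 1 else 0))"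
    if "k \<in> A" for k
  proof -
    have kJ: "k \<in> J" using that AJ by auto
    have [measurable]: "Measurable.pred (noise \<beta> J) (\<lambda>\<omega>. chooses A v \<omega> k)"
      using finA AJ by (rule chooses_meas)
    note [measurable] = noise_comp[OF kJ, of \<beta>]
    have "integrable (noise \<beta> J) (\<lambda>\<omega>. v k + \<omega> k)"
      using b kJ _ gumbel_shift_int(1)[OF b] by (rule integrable_noise_comp) simp
    then show ?thesis
    proof (rule Bochner_Integration.integrable_bound)
      show "(\<lambda>\<omega>. (v k + \<omega> k) * (if chooses A v \<omega> k then 1 else 0)) \<in> borel_measurable (noise \<beta> J)"
        by measurable
    qed auto
  qed
  have Mmeas: "(\<lambda>\<omega>. Max ((\<lambda>t. v t + \<omega> t) ` A)) \<in> borel_measurable (noise \<beta> J)"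
  proof (rule borel_measurable_Max[OF finA])
    fix t assume "t \<in> A"
    then have tJ: "t \<in> J" using AJ by auto
    note [measurable] = noise_comp[OF tJ, of \<beta>]
    show "(\<lambda>\<omega>. v t + \<omega> t) \<in> borel_measurable (noise \<beta> J)" by measurable
  qed
  have "(\<integral>\<omega>. Max ((\<lambda>t. v t + \<omega> t) ` A) \<partial>noise \<beta> J) =
      (\<integral>\<omega>. (\<Sum>k\<in>A. (v k + \<omega> k) * (if chooses A v \<omega> k then 1 else 0)) \<partial>noise \<beta> J)"
    using Mmeas ae
    by (intro integral_cong_AE) (auto intro!: borel_measurable_sum intro: borel_measurable_integrable[OF intk])
  also have "\<dots> = (\<Sum>k\<in>A. (\<integral>\<omega>. (v k + \<omega> k) * (if chooses A v \<omega> k then 1 else 0) \<partial>noise \<beta> J))"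
    using intk by (intro Bochner_Integration.integral_sum) auto
  also have "\<dots> = (\<Sum>k\<in>A. exp (v k / \<beta>) / S * (\<beta> * ln S + (\<integral>e. e \<partial>gumbel \<beta>)))"
  proof (rule sum.cong[OF refl])
    fix k assume kA: "k \<in> A"
    have "(\<integral>\<omega>. (\<lambda>x. x) (v k + \<omega> k) * (if chooses A v \<omega> k then 1 else 0) \<partial>noise \<beta> J)
      = exp (v k / \<beta>) / S * (\<integral>e. (\<lambda>x. x) (\<beta> * ln S + e) \<partial>gumbel \<beta>)"
      unfolding S_def by (rule E2[OF b finJ kA AJ]) (auto intro: gumbel_shift_int(1)[OF b])
    then show "(\<integral>\<omega>. (v k + \<omega> k) * (if chooses A v \<omega> k then 1 else 0) \<partial>noise \<beta> J) =
        exp (v k / \<beta>) / S * (\<beta> * ln S + (\<integral>e. e \<partial>gumbel \<beta>))"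
      using gumbel_shift_int(2)[OF b] by simp
  qed
  also have "\<dots> = (\<Sum>k\<in>A. exp (v k / \<beta>)) / S * (\<beta> * ln S + (\<integral>e. e \<partial>gumbel \<beta>))"
    by (simp add: sum_distrib_right sum_divide_distrib)
  also have "\<dots> = \<beta> * ln S + (\<integral>e. e \<partial>gumbel \<beta>)" using S0 by (simp add: S_def)
  finally show ?thesis .
qed

lemma E2id:
  fixes v :: "nat \<Rightarrow> real"
  assumes b: "\<beta> > 0" and finJ: "finite J" and AJ: "A \<subseteq> J"
  defines "S \<equiv> (\<Sum>t\<in>A. exp (v t / \<beta>))"
  shows "(\<integral>\<omega>. (v i + \<omega> i) * (if chooses A v \<omega> i then 1 else 0) \<partial>noise \<beta> J) =
     (if i \<in> A then exp (v i / \<beta>) / S * (\<beta> * ln S + (\<integral>e. e \<partial>gumbel \<beta>)) else 0)"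
proof (cases "i \<in> A")
  case True
  have "(\<integral>\<omega>. (\<lambda>x. x) (v i + \<omega> i) * (if chooses A v \<omega> i then 1 else 0) \<partial>noise \<beta> J)
      = exp (v i / \<beta>) / S * (\<integral>e. (\<lambda>x. x) (\<beta> * ln S + e) \<partial>gumbel \<beta>)"
    unfolding S_def by (rule E2[OF b finJ True AJ]) (auto intro: gumbel_shift_int(1)[OF b])
  then show ?thesis using True gumbel_shift_int(2)[OF b] by simp
next
  case False
  then show ?thesis by (simp add: chooses_def)
qed

lemma sq_le_exp: assumes "(t::real) \<ge> 0" shows "t\<^sup>2 \<le> exp t"
proof -
  have "1 + t/2 + (t/2)\<^sup>2 / 2 \<le> exp (t/2)" using assms by (intro exp_lower_Taylor_quadratic) simp
  moreover have "t \<le> 1 + t/2 + (t/2)\<^sup>2 / 2"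
  proof -
    have "0 \<le> ((t/2 - 1)\<^sup>2 + 1) / 2" by simp
    then show ?thesis by (simp add: power2_eq_square field_simps)
  qed
  ultimately have "t \<le> exp (t/2)" by linarith
  then have "t * t \<le> exp (t/2) * exp (t/2)" using assms by (intro mult_mono) auto
  also have "\<dots> = exp t" by (simp flip: exp_add)
  finally show ?thesis by (simp add: power2_eq_square)
qed

lemma ln_lower_pade: assumes "(k::real) \<ge> 0" shows "2 * k / (2 + k) \<le> ln (1 + k)"
proof -
  let ?f = "\<lambda>k::real. ln (1 + k) - 2 * k / (2 + k)"
  have "?f 0 \<le> ?f k"
  proof (rule DERIV_nonneg_imp_nondecreasing[OF assms])
    fix x :: real assume x: "0 \<le> x" "x \<le> k"
    have "DERIV ?f x :> 1 / (1 + x) - 4 / (2 + x)\<^sup>2"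
      using x by (auto intro!: derivative_eq_intros simp: field_simps power2_eq_square)
    moreover have "1 / (1 + x) - 4 / (2 + x)\<^sup>2 \<ge> 0"
    proof -
      have "4 * (1 + x) \<le> (2 + x)\<^sup>2" by (simp add: power2_eq_square algebra_simps)
      then have "4 / (2 + x)\<^sup>2 \<le> 1 / (1 + x)" using x by (simp add: field_simps)
      then show ?thesis by simp
    qed
    ultimately show "\<exists>y. DERIV ?f x :> y \<and> y \<ge> 0" by blast
  qed
  then show ?thesis by simp
qed

lemma key_ineq_a:
  fixes r t :: real
  assumes r: "r \<ge> 1" and t: "t \<ge> 0"
  shows "(r - 1) * (ln r + t) * t \<le> (r * exp t - r + 1) * ln r"
proof -
  define k where "k = r - 1"
  define z where "z = ln r"
  have k0: "k \<ge> 0" using r by (simp add: k_def)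
  have z0: "z \<ge> 0" using r by (simp add: z_def)
  have rk: "r = 1 + k" by (simp add: k_def)
  have zk: "2 * k / (2 + k) \<le> z" unfolding z_def rk by (rule ln_lower_pade[OF k0])
  have e1: "exp t - 1 - t \<ge> t\<^sup>2 / 2" using exp_lower_Taylor_quadratic[OF t] by simp
  have "k * t\<^sup>2 * (1 - z / 2) \<le> z * exp t"
  proof (cases "z \<ge> 2")
    case True
    then have "k * t\<^sup>2 * (1 - z / 2) \<le> 0" using k0
      by (intro mult_nonneg_nonpos) auto
    also have "0 \<le> z * exp t" using z0 by simp
    finally show ?thesis .
  next
    case False
    have "k * t\<^sup>2 * (1 - z / 2) \<le> k * exp t * (1 - z / 2)"
      using False k0 sq_le_exp[OF t] by (intro mult_right_mono mult_left_mono) auto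
    also have "k * (1 - z / 2) \<le> z"
    proof -
      have "2 * k \<le> z * (2 + k)" using zk k0 by (simp add: field_simps)
      then show ?thesis by (simp add: algebra_simps)
    qed
    then have "k * exp t * (1 - z / 2) \<le> z * exp t"
      by (metis exp_gt_zero less_eq_real_def mult.commute mult.left_commute mult_right_mono)
    finally show ?thesis .
  qed
  moreover have "k * z * (exp t - 1 - t) \<ge> k * z * (t\<^sup>2 / 2)"
    using e1 k0 z0 by (intro mult_left_mono) auto
  ultimately have "k * (z + t) * t \<le> ((1 + k) * exp t - k) * z"
    by (simp add: algebra_simps power2_eq_square)
  then show ?thesis unfolding k_def z_def by (simp add: algebra_simps)
qed

definition Fq :: "real \<Rightarrow> real \<Rightarrow> real" where
  "Fq a r = a * ln (a + r - 1) / ((a + r - 1) * (ln (a + r - 1) - ln r))"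

lemma Fq_mono_r:
  assumes a: "a > 1" and r: "1 \<le> r1" "r1 \<le> r2"
  shows "Fq a r1 \<le> Fq a r2"
  unfolding Fq_def
proof (rule DERIV_nonneg_imp_nondecreasing[OF r(2)])
  fix x assume x: "r1 \<le> x" "x \<le> r2"
  define T where "T = a + x - 1"
  have x1: "x \<ge> 1" using x r by simp
  have Tx: "T > x" using a by (simp add: T_def)
  have T1: "T > 1" using Tx x1 by simp
  have lpos: "ln T - ln x > 0" using Tx x1 by simp
  have LT: "ln T \<ge> 0" using T1 by simp
  have dN: "DERIV (\<lambda>y. a * ln (a + y - 1)) x :> a * (1 / T)"
    using T1 by (auto intro!: derivative_eq_intros simp: T_def)
  have dD: "DERIV (\<lambda>y. (a + y - 1) * (ln (a + y - 1) - ln y)) x :>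
      1 * (ln T - ln x) + T * (1 / T - 1 / x)"
    using T1 x1 by (auto intro!: derivative_eq_intros simp: T_def)
  have D0: "(a + x - 1) * (ln (a + x - 1) - ln x) \<noteq> 0"
    using lpos T1 by (simp add: T_def)
  have q: "DERIV (\<lambda>y. a * ln (a + y - 1) / ((a + y - 1) * (ln (a + y - 1) - ln y))) x :>
     ((a * (1 / T)) * (T * (ln T - ln x)) - (1 * (ln T - ln x) + T * (1 / T - 1 / x)) * (a * ln T))
       / (T * (ln T - ln x)) ^ Suc (Suc 0)"
    using DERIV_quotient[OF dN dD D0] by (simp add: T_def)
  have num: "(a * (1 / T)) * (T * (ln T - ln x)) - (1 * (ln T - ln x) + T * (1 / T - 1 / x)) * (a * ln T) \<ge> 0"
  proof -
    have "ln T - ln x = ln (T / x)" using T1 x1 by (simp add: ln_div)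
    also have "\<dots> \<le> T / x - 1" using T1 x1 by (intro ln_le_minus_one) simp
    finally have e: "ln T - ln x \<le> T / x - 1" .
    have e2: "T * (1 / T - 1 / x) = 1 - T / x" using T1 x1 by (simp add: field_simps)
    have "1 * (ln T - ln x) + T * (1 / T - 1 / x) \<le> 0" unfolding e2 using e by simp
    then have p: "(1 * (ln T - ln x) + T * (1 / T - 1 / x)) * (a * ln T) \<le> 0"
      using a LT by (intro mult_nonpos_nonneg) auto
    have q: "0 \<le> (a * (1 / T)) * (T * (ln T - ln x))" using a T1 lpos by simp
    show ?thesis using order_trans[OF p q] by (simp only: diff_ge_0_iff_ge)
  qed
  show "\<exists>y. DERIV (\<lambda>y. a * ln (a + y - 1) / ((a + y - 1) * (ln (a + y - 1) - ln y))) x :> y \<and> 0 \<le> y"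
    using q num by (intro exI[of _ "((a * (1 / T)) * (T * (ln T - ln x)) - (1 * (ln T - ln x) + T * (1 / T - 1 / x)) * (a * ln T))
       / (T * (ln T - ln x)) ^ Suc (Suc 0)"]) auto
qed

lemma Fq_mono_a:
  assumes r: "r \<ge> 1" and a: "1 < a1" "a1 \<le> a2"
  shows "Fq a2 r \<le> Fq a1 r"
  unfolding Fq_def
proof (rule DERIV_nonpos_imp_nonincreasing[OF a(2)])
  fix y assume y: "a1 \<le> y" "y \<le> a2"
  define T where "T = y + r - 1"
  have y1: "y > 1" using y a by simp
  have Tr: "T > r" using y1 by (simp add: T_def)
  have T1: "T > 1" using Tr r by simp
  have lpos: "ln T - ln r > 0" using Tr r by simp
  have dN: "DERIV (\<lambda>y. y * ln (y + r - 1)) y :> 1 * ln T + y * (1 / T)"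
    using T1 by (auto intro!: derivative_eq_intros simp: T_def)
  have dD: "DERIV (\<lambda>y. (y + r - 1) * (ln (y + r - 1) - ln r)) y :>
      1 * (ln T - ln r) + T * (1 / T)"
    using T1 by (auto intro!: derivative_eq_intros simp: T_def)
  have D0: "(y + r - 1) * (ln (y + r - 1) - ln r) \<noteq> 0"
    using lpos T1 by (simp add: T_def)
  have q: "DERIV (\<lambda>y. y * ln (y + r - 1) / ((y + r - 1) * (ln (y + r - 1) - ln r))) y :>
     ((1 * ln T + y * (1 / T)) * (T * (ln T - ln r)) - (1 * (ln T - ln r) + T * (1 / T)) * (y * ln T))
       / (T * (ln T - ln r)) ^ Suc (Suc 0)"
    using DERIV_quotient[OF dN dD D0] by (simp add: T_def)
  have num: "(1 * ln T + y * (1 / T)) * (T * (ln T - ln r)) - (1 * (ln T - ln r) + T * (1 / T)) * (y * ln T) \<le> 0"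
  proof -
    define t where "t = ln T - ln r"
    have t0: "t \<ge> 0" using lpos by (simp add: t_def)
    have et: "r * exp t = T" using T1 r by (simp add: t_def exp_diff)
    have yeq: "y = r * exp t - r + 1" using et by (simp add: T_def)
    have LT: "ln T = ln r + t" by (simp add: t_def)
    have "(1 * ln T + y * (1 / T)) * (T * (ln T - ln r)) - (1 * (ln T - ln r) + T * (1 / T)) * (y * ln T)
        = (r - 1) * (ln r + t) * t - y * ln r"
      using T1 unfolding LT by (simp add: field_simps T_def t_def)
    also have "\<dots> \<le> 0" using key_ineq_a[OF r t0] yeq by simp
    finally show ?thesis .
  qed
  show "\<exists>ya. DERIV (\<lambda>y. y * ln (y + r - 1) / ((y + r - 1) * (ln (y + r - 1) - ln r))) y :> ya \<and> ya \<le> 0"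
    using q num lpos T1 by (intro exI[of _ "((1 * ln T + y * (1 / T)) * (T * (ln T - ln r)) - (1 * (ln T - ln r) + T * (1 / T)) * (y * ln T))
       / (T * (ln T - ln r)) ^ Suc (Suc 0)"]) (auto intro!: divide_nonpos_pos mult_pos_pos)
qed

lemma real_main:
  fixes K :: nat
  assumes b: "\<beta> > 0" and K: "K \<ge> 1" and a1: "1 \<le> a" and aB: "a \<le> exp (1 / \<beta>)"
    and Sa: "S - a \<ge> real K - 1"
  shows "c_const \<beta> K * (ln S - ln (S - a + 1)) \<le> a / S * ln S"
proof -
  define r where "r = S - a + 1"
  define B where "B = exp (1 / \<beta>)"
  have rK: "r \<ge> real K" using Sa by (simp add: r_def)
  have K1: "real K \<ge> 1" using K by simp
  have S: "S = a + r - 1" by (simp add: r_def)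
  have S1: "S \<ge> 1" using a1 rK K1 S by simp
  have cF: "c_const \<beta> K = Fq B (real K)"
    by (simp add: c_const_def Fq_def B_def Let_def algebra_simps)
  show ?thesis
  proof (cases "a = 1")
    case True
    then have "ln S - ln (S - a + 1) = 0" by simp
    then show ?thesis using S1 True by simp
  next
    case False
    then have a1': "a > 1" using a1 by simp
    have lpos: "ln S - ln r > 0" using a1' rK K1 S by simp
    have "c_const \<beta> K \<le> Fq a (real K)"
      unfolding cF B_def using Fq_mono_a[OF K1 a1' aB] .
    also have "\<dots> \<le> Fq a r" using Fq_mono_r[OF a1' K1 rK] .
    also have "\<dots> = a * ln S / (S * (ln S - ln r))" by (simp add: Fq_def S)
    finally have "c_const \<beta> K * (ln S - ln r) \<le> a * ln S / (S * (ln S - ln r)) * (ln S - ln r)"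
      using lpos by (intro mult_right_mono) auto
    also have "\<dots> = a / S * ln S" using lpos S1 by (simp add: field_simps)
    finally show ?thesis by (simp add: r_def)
  qed
qed

lemma top_exists:
  fixes v :: "nat \<Rightarrow> real"
  assumes fin: "finite I" and K: "K \<le> card I"
  shows "\<exists>A. A \<subseteq> I \<and> card A = K \<and> (\<forall>a\<in>A. \<forall>b\<in>I - A. v b \<le> v a)"
  using K
proof (induction K)
  case 0 then show ?case by (intro exI[of _ "{}"]) auto
next
  case (Suc K)
  then obtain A where A: "A \<subseteq> I" "card A = K" "\<forall>a\<in>A. \<forall>b\<in>I - A. v b \<le> v a" by auto
  have finA: "finite A" using A(1) fin finite_subset by auto
  have ne: "I - A \<noteq> {}"
  proof
    assume "I - A = {}"
    then have "I \<subseteq> A" by auto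
    then have "card I \<le> card A" using card_mono finA by auto
    with A(2) Suc.prems show False by simp
  qed
  have finD: "finite (I - A)" using fin by simp
  have "Max (v ` (I - A)) \<in> v ` (I - A)" using ne finD by (intro Max_in) auto
  then obtain c where c: "c \<in> I - A" "v c = Max (v ` (I - A))" by auto
  have cmax: "\<forall>b\<in>I - A. v b \<le> v c" using finD c by auto
  show ?case
  proof (intro exI[of _ "insert c A"] conjI)
    show "insert c A \<subseteq> I" using A c by auto
    show "card (insert c A) = Suc K" using A finA c by simp
    show "\<forall>a\<in>insert c A. \<forall>b\<in>I - insert c A. v b \<le> v a" using A cmax by auto
  qed
qed

lemma top_slates_props:
  fixes v :: "nat \<Rightarrow> real"
  assumes fin: "finite I" and K: "K \<ge> 1"
  shows "finite (top_slates K I v d)" "top_slates K I v d \<noteq> {}"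
    "\<And>A. A \<in> top_slates K I v d \<Longrightarrow> A \<subseteq> insert d I \<and> A \<noteq> {}"
proof -
  show "finite (top_slates K I v d)"
  proof (cases "K \<le> card I")
    case True
    have "top_slates K I v d \<subseteq> Pow I" using True by (auto simp: top_slates_def)
    then show ?thesis using fin finite_subset by (metis finite_Pow_iff)
  qed (simp add: top_slates_def)
  show "top_slates K I v d \<noteq> {}"
  proof (cases "K \<le> card I")
    case True
    then show ?thesis using top_exists[OF fin True, of v] by (auto simp: top_slates_def)
  qed (simp add: top_slates_def)
  fix A assume "A \<in> top_slates K I v d"
  then show "A \<subseteq> insert d I \<and> A \<noteq> {}" using K
    by (auto simp: top_slates_def split: if_splits)
qed

lemma uw_formula:
  fixes v :: "nat \<Rightarrow> real" and d :: nat
  assumes b: "\<beta> > 0" and fin: "finite I" and K: "K \<ge> 1"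
  defines "TS \<equiv> top_slates K I v d"
  shows "user_welfare \<beta> K I v d =
    (\<Sum>A\<in>TS. \<beta> * ln (\<Sum>t\<in>A. exp (v t / \<beta>))) / card TS + (\<integral>e. e \<partial>gumbel \<beta>)"
proof -
  note P = top_slates_props[OF fin K, where v=v and d=d, folded TS_def]
  have "user_welfare \<beta> K I v d = (\<Sum>A\<in>TS. \<integral>\<omega>. Max ((\<lambda>t. v t + \<omega> t) ` A) \<partial>noise \<beta> (insert d I)) / card TS"
    unfolding user_welfare_def TS_def[symmetric] by (rule integral_pmf_of_set[OF P(2,1)])
  also have "\<dots> = (\<Sum>A\<in>TS. \<beta> * ln (\<Sum>t\<in>A. exp (v t / \<beta>)) + (\<integral>e. e \<partial>gumbel \<beta>)) / card TS"
    using P(3) fin by (intro arg_cong2[where f="(/)"] sum.cong refl E1[OF b]) auto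
  also have "\<dots> = (\<Sum>A\<in>TS. \<beta> * ln (\<Sum>t\<in>A. exp (v t / \<beta>))) / card TS + (\<integral>e. e \<partial>gumbel \<beta>)"
    using P(1,2) by (simp add: sum.distrib add_divide_distrib card_gt_0_iff)
  finally show ?thesis .
qed

lemma uu_formula:
  fixes v :: "nat \<Rightarrow> real" and d :: nat
  assumes b: "\<beta> > 0" and fin: "finite I" and K: "K \<ge> 1"
  defines "TS \<equiv> top_slates K I v d"
  shows "user_util \<beta> K I v d i =
    (\<Sum>A\<in>TS. if i \<in> A then exp (v i / \<beta>) / (\<Sum>t\<in>A. exp (v t / \<beta>)) *
        (\<beta> * ln (\<Sum>t\<in>A. exp (v t / \<beta>)) + (\<integral>e. e \<partial>gumbel \<beta>)) else 0) / card TS"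
proof -
  note P = top_slates_props[OF fin K, where v=v and d=d, folded TS_def]
  have "user_util \<beta> K I v d i = (\<Sum>A\<in>TS. \<integral>\<omega>. (v i + \<omega> i) * (if chooses A v \<omega> i then 1 else 0) \<partial>noise \<beta> (insert d I)) / card TS"
    unfolding user_util_def TS_def[symmetric] by (rule integral_pmf_of_set[OF P(2,1)])
  also have "\<dots> = (\<Sum>A\<in>TS. if i \<in> A then exp (v i / \<beta>) / (\<Sum>t\<in>A. exp (v t / \<beta>)) *
        (\<beta> * ln (\<Sum>t\<in>A. exp (v t / \<beta>)) + (\<integral>e. e \<partial>gumbel \<beta>)) else 0) / card TS"
    using P(3) fin by (intro arg_cong2[where f="(/)"] sum.cong refl E2id[OF b]) auto
  finally show ?thesis .
qed

lemma exchange: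
  fixes v :: "nat \<Rightarrow> real"
  assumes fin: "finite I" and AI: "A \<subseteq> I" and top: "\<forall>a\<in>A. \<forall>b\<in>I - A. v b \<le> v a"
    and BI: "B \<subseteq> I" and cB: "card B = card A" and b: "\<beta> > 0"
  shows "(\<Sum>t\<in>B. exp (v t / \<beta>)) \<le> (\<Sum>t\<in>A. exp (v t / \<beta>))"
proof -
  let ?G = "\<lambda>t. exp (v t / \<beta>)"
  have finA: "finite A" and finB: "finite B" using fin AI BI finite_subset by auto
  have "card (B - A) = card (A - B)"
  proof -
    have "card B = card (B \<inter> A) + card (B - A)" using finB by (metis card_Int_Diff)
    moreover have "card A = card (A \<inter> B) + card (A - B)" using finA by (metis card_Int_Diff)
    ultimately show ?thesis using cB by (simp add: Int_commute)
  qed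
  then obtain f where f: "bij_betw f (B - A) (A - B)"
    using finite_same_card_bij[of "B - A" "A - B"] finA finB by auto
  have "(\<Sum>t\<in>B - A. ?G t) \<le> (\<Sum>t\<in>B - A. ?G (f t))"
  proof (rule sum_mono)
    fix x assume x: "x \<in> B - A"
    then have fx: "f x \<in> A" using f by (auto dest: bij_betwE)
    have "x \<in> I - A" using x BI by auto
    then have "v x \<le> v (f x)" using top fx by auto
    then show "?G x \<le> ?G (f x)" using b by (simp add: divide_right_mono)
  qed
  also have "\<dots> = (\<Sum>t\<in>A - B. ?G t)" using f by (rule sum.reindex_bij_betw)
  finally have le: "(\<Sum>t\<in>B - A. ?G t) \<le> (\<Sum>t\<in>A - B. ?G t)" .
  have "(\<Sum>t\<in>B. ?G t) = (\<Sum>t\<in>B \<inter> A. ?G t) + (\<Sum>t\<in>B - A. ?G t)"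
    using finB by (rule sum.Int_Diff)
  also have "\<dots> \<le> (\<Sum>t\<in>A \<inter> B. ?G t) + (\<Sum>t\<in>A - B. ?G t)" using le by (simp add: Int_commute)
  also have "\<dots> = (\<Sum>t\<in>A. ?G t)" using finA by (rule sum.Int_Diff[symmetric])
  finally show ?thesis .
qed

lemma c_pos:
  assumes b: "\<beta> > 0" and K: "K \<ge> 1"
  shows "c_const \<beta> K > 0"
proof -
  define B where "B = exp (1 / \<beta>)"
  have B1: "B > 1" using b by (simp add: B_def)
  have K1: "real K \<ge> 1" using K by simp
  have l1: "ln (B - 1 + real K) > ln (real K)" using B1 K1 by simp
  have l2: "ln (real K) \<ge> 0" using K1 by simp
  have "0 < B * ln (B - 1 + real K) / ((B - 1 + real K) * (ln (B - 1 + real K) - ln (real K)))"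
    using B1 K1 l1 l2 by (intro divide_pos_pos mult_pos_pos) auto
  then show ?thesis by (simp add: c_const_def Let_def B_def)
qed

lemma sum_exp_ge_card:
  fixes v :: "nat \<Rightarrow> real"
  assumes b: "\<beta> > 0" and v0: "\<And>t. 0 \<le> v t"
  shows "real (card A) \<le> (\<Sum>t\<in>A. exp (v t / \<beta>))"
proof (cases "finite A")
  case True
  have "(\<Sum>t\<in>A. (1::real)) \<le> (\<Sum>t\<in>A. exp (v t / \<beta>))"
    using b v0 by (intro sum_mono) simp
  then show ?thesis by simp
qed simp

lemma per_pair:
  fixes v :: "nat \<Rightarrow> real"
  assumes b: "\<beta> > 0" and K1: "1 \<le> K" and Kn: "K \<le> n" and i: "i < n"
    and v01: "\<And>t. 0 \<le> v t \<and> v t \<le> 1" and vn: "v n = 0" and mu: "\<mu> \<ge> 0"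
    and A: "A \<in> top_slates K {..<n} v n" and A': "A' \<in> top_slates K ({..<n} - {i}) v n"
  defines "L \<equiv> \<lambda>A. (\<Sum>t\<in>A. exp (v t / \<beta>))"
  shows "\<beta> * ln (L A) - (if i \<in> A then exp (v i / \<beta>) / L A * (\<beta> * ln (L A) + \<mu>) else 0) / c_const \<beta> K
      \<le> \<beta> * ln (L A')"
proof -
  define I where "I = {..<n}"
  define I' where "I' = I - {i}"
  have finI: "finite I" and finI': "finite I'" by (auto simp: I_def I'_def)
  have cI: "card I = n" by (simp add: I_def)
  have iI: "i \<in> I" using i by (simp add: I_def)
  have cI': "card I' = n - 1" using iI by (simp add: I'_def cI)
  have v0: "\<And>t. 0 \<le> v t" using v01 by simp
  have c0: "c_const \<beta> K > 0" using c_pos[OF b K1] .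
  have AI: "A \<subseteq> I" and cA: "card A = K" and topA: "\<forall>a\<in>A. \<forall>b\<in>I - A. v b \<le> v a"
    using A Kn by (auto simp: top_slates_def I_def split: if_splits)
  have finA: "finite A" using AI finI finite_subset by auto
  have Ane: "A \<noteq> {}" using cA K1 by auto
  have LA0: "L A > 0" unfolding L_def using finA Ane by (intro sum_pos) auto
  have Lpos: "L X > 0" if "finite X" "X \<noteq> {}" for X unfolding L_def using that by (intro sum_pos) auto
  show ?thesis
  proof (cases "i \<in> A")
    case True
    define a where "a = exp (v i / \<beta>)"
    define S where "S = L A"
    have a1: "1 \<le> a" using v0[of i] b by (simp add: a_def)
    have aB: "a \<le> exp (1 / \<beta>)" using v01[of i] b by (simp add: a_def divide_right_mono)
    have Srem: "S - a = L (A - {i})" unfolding S_def L_def a_def using finA True by (simp add: sum.remove)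
    have cAi: "card (A - {i}) = K - 1" using True cA finA by simp
    have Sa: "S - a \<ge> real K - 1"
      using Srem sum_exp_ge_card[OF b v0, of "A - {i}"] cAi K1 by (simp add: L_def of_nat_diff)
    have LA': "L A' \<ge> S - a + 1"
    proof (cases "K \<le> card I'")
      case True
      have A'I': "A' \<subseteq> I'" and cA': "card A' = K" and topA': "\<forall>a\<in>A'. \<forall>b\<in>I' - A'. v b \<le> v a"
        using A' True by (auto simp: top_slates_def I_def I'_def split: if_splits)
      have "card (I - A) = n - K" using AI finA cA cI by (simp add: card_Diff_subset)
      moreover have "K < n" using True cI' K1 by simp
      ultimately have "card (I - A) > 0" by simp
      then have "I - A \<noteq> {}" by (simp add: card_gt_0_iff)
      then obtain j where j: "j \<in> I" "j \<notin> A" by auto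
      have ji: "j \<noteq> i" using j \<open>i \<in> A\<close> by auto
      define B where "B = insert j (A - {i})"
      have BI': "B \<subseteq> I'" using AI j ji by (auto simp: B_def I'_def)
      have cB: "card B = K" using cAi finA j K1 by (simp add: B_def)
      have "L B \<le> L A'" unfolding L_def
        using exchange[OF finI' A'I' topA' BI' _ b] cB cA' by simp
      moreover have "L B = exp (v j / \<beta>) + L (A - {i})"
        unfolding B_def L_def using finA j by simp
      moreover have ej: "exp (v j / \<beta>) \<ge> 1" using v0[of j] b by simp
      ultimately show ?thesis using Srem ej by linarith
    next
      case False
      then have A'eq: "A' = insert n I'" using A' by (simp add: top_slates_def I_def I'_def)
      have Kn': "K = n" using False cI' Kn by simp
      have "A = I" using card_subset_eq[OF finI AI] cA cI Kn' by simp
      have nI': "n \<notin> I'" by (simp add: I'_def I_def)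
      have "L A' = exp (v n / \<beta>) + L I'" unfolding A'eq L_def using finI' nI' by simp
      also have "\<dots> = 1 + L (A - {i})" using vn \<open>A = I\<close> by (simp add: I'_def)
      finally show ?thesis using Srem by simp
    qed
    have r0: "S - a + 1 > 0" using Sa K1 by simp
    have "ln (S - a + 1) \<le> ln (L A')" using LA' r0 by simp
    then have "\<beta> * ln S - \<beta> * ln (L A') \<le> \<beta> * (ln S - ln (S - a + 1))"
      using b by (simp add: algebra_simps)
    also have "ln S - ln (S - a + 1) \<le> a / S * ln S / c_const \<beta> K"
      using real_main[OF b K1 a1 aB Sa] c0 by (subst pos_le_divide_eq) (auto simp: mult.commute)
    then have "\<beta> * (ln S - ln (S - a + 1)) \<le> \<beta> * (a / S * ln S / c_const \<beta> K)"
      using b by (intro mult_left_mono) auto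
    also have "\<dots> = a / S * (\<beta> * ln S) / c_const \<beta> K" by simp
    also have "\<dots> \<le> a / S * (\<beta> * ln S + \<mu>) / c_const \<beta> K"
      using mu c0 LA0 a1 by (intro divide_right_mono mult_left_mono) (auto simp: S_def)
    finally show ?thesis using True by (simp add: S_def a_def)
  next
    case False
    then have AI': "A \<subseteq> I'" using AI by (auto simp: I'_def)
    have "K \<le> card I'" using card_mono[OF finI' AI'] cA by simp
    then have A'I': "A' \<subseteq> I'" and cA': "card A' = K" and topA': "\<forall>a\<in>A'. \<forall>b\<in>I' - A'. v b \<le> v a"
      using A' by (auto simp: top_slates_def I_def I'_def split: if_splits)
    have "L A \<le> L A'" unfolding L_def
      using exchange[OF finI' A'I' topA' AI' _ b] cA cA' by simp
    then have "ln (L A) \<le> ln (L A')" using LA0 by simp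
    then show ?thesis using False b by simp
  qed
qed

lemma per_user:
  fixes v :: "nat \<Rightarrow> real"
  assumes b: "\<beta> > 0" and K1: "1 \<le> K" and Kn: "K \<le> n" and i: "i < n"
    and v01: "\<And>t. 0 \<le> v t \<and> v t \<le> 1" and vn: "v n = 0"
  shows "user_welfare \<beta> K {..<n} v n - user_welfare \<beta> K ({..<n} - {i}) v n
    \<le> user_util \<beta> K {..<n} v n i / c_const \<beta> K"
proof -
  define \<mu> where "\<mu> = (\<integral>e. e \<partial>gumbel \<beta>)"
  have mu: "\<mu> \<ge> 0" unfolding \<mu>_def using gumbel_mean(2)[OF b] .
  define c where "c = c_const \<beta> K"
  have c0: "c > 0" unfolding c_def using c_pos[OF b K1] .
  define TS where "TS = top_slates K {..<n} v n"
  define TS' where "TS' = top_slates K ({..<n} - {i}) v n"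
  have P1: "finite TS" "TS \<noteq> {}" unfolding TS_def using top_slates_props[OF _ K1] by auto
  have P2: "finite TS'" "TS' \<noteq> {}" unfolding TS'_def using top_slates_props[OF _ K1] by auto
  define \<phi> where "\<phi> A = \<beta> * ln (\<Sum>t\<in>A. exp (v t / \<beta>))" for A
  define Pf where "Pf A = (if i \<in> A then exp (v i / \<beta>) / (\<Sum>t\<in>A. exp (v t / \<beta>)) *
        (\<beta> * ln (\<Sum>t\<in>A. exp (v t / \<beta>)) + \<mu>) else 0)" for A
  have pair: "\<phi> A - Pf A / c \<le> \<phi> A'" if "A \<in> TS" "A' \<in> TS'" for A A'
    using per_pair[where v=v and A=A and A'=A' and \<mu>=\<mu>, OF b K1 Kn i v01 vn mu] that
    unfolding \<phi>_def Pf_def c_def TS_def TS'_def by simp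
  define X where "X = (\<Sum>A\<in>TS. \<phi> A - Pf A / c) / card TS"
  have cT: "card TS > 0" and cT': "card TS' > 0" using P1 P2 by (auto simp: card_gt_0_iff)
  have X1: "X \<le> \<phi> A'" if A': "A' \<in> TS'" for A'
  proof -
    have "(\<Sum>A\<in>TS. \<phi> A - Pf A / c) \<le> (\<Sum>A\<in>TS. \<phi> A')"
      using pair A' by (intro sum_mono) auto
    also have "\<dots> = card TS * \<phi> A'" by simp
    finally show ?thesis unfolding X_def using cT by (simp add: pos_divide_le_eq mult.commute)
  qed
  have X2: "X \<le> (\<Sum>A'\<in>TS'. \<phi> A') / card TS'"
  proof -
    have "(\<Sum>A'\<in>TS'. X) \<le> (\<Sum>A'\<in>TS'. \<phi> A')" using X1 by (intro sum_mono) auto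
    then have "card TS' * X \<le> (\<Sum>A'\<in>TS'. \<phi> A')" by simp
    then show ?thesis using cT' by (simp add: pos_le_divide_eq mult.commute)
  qed
  have Xeq: "X = (\<Sum>A\<in>TS. \<phi> A) / card TS - (\<Sum>A\<in>TS. Pf A) / card TS / c"
    unfolding X_def by (simp add: sum_subtractf diff_divide_distrib sum_divide_distrib[symmetric])
  have uw1: "user_welfare \<beta> K {..<n} v n = (\<Sum>A\<in>TS. \<phi> A) / card TS + \<mu>"
    unfolding TS_def \<phi>_def \<mu>_def by (rule uw_formula[OF b _ K1]) simp
  have uw2: "user_welfare \<beta> K ({..<n} - {i}) v n = (\<Sum>A\<in>TS'. \<phi> A) / card TS' + \<mu>"
    unfolding TS'_def \<phi>_def \<mu>_def by (rule uw_formula[OF b _ K1]) simp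
  have uu: "user_util \<beta> K {..<n} v n i = (\<Sum>A\<in>TS. Pf A) / card TS"
    unfolding TS_def Pf_def \<mu>_def by (rule uu_formula[OF b _ K1]) simp
  show ?thesis
    unfolding uw1 uw2 uu c_def[symmetric] using X2 Xeq by simp
qed

theorem lemma3:
  fixes \<sigma> :: "real ^ 'd \<Rightarrow> real ^ 'd \<Rightarrow> real"
    and x :: "nat \<Rightarrow> real ^ 'd" and m :: nat
    and S :: "nat \<Rightarrow> (real ^ 'd) set" and s :: "nat \<Rightarrow> real ^ 'd"
    and n K i :: nat and \<beta> :: real
  assumes "\<beta> > 0" and "1 \<le> K" and "K \<le> n"
    and "\<And>a y. 0 \<le> \<sigma> a y \<and> \<sigma> a y \<le> 1"
    and "\<And>k. k < n \<Longrightarrow> s k \<in> S k"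
    and "i < n"
  shows "welfare \<sigma> \<beta> K m x n s {..<n} - welfare \<sigma> \<beta> K m x n s ({..<n} - {i})
           \<le> utility \<sigma> \<beta> K m x n s i / c_const \<beta> K"
proof -
  have each: "user_welfare \<beta> K {..<n} (relv \<sigma> n s (x j)) n - user_welfare \<beta> K ({..<n} - {i}) (relv \<sigma> n s (x j)) n
    \<le> user_util \<beta> K {..<n} (relv \<sigma> n s (x j)) n i / c_const \<beta> K" for j
  proof (rule per_user[OF assms(1,2,3,6)])
    show "0 \<le> relv \<sigma> n s (x j) t \<and> relv \<sigma> n s (x j) t \<le> 1" for t
      using assms(4) by (simp add: relv_def)
    show "relv \<sigma> n s (x j) n = 0" by (simp add: relv_def)
  qed
  have "welfare \<sigma> \<beta> K m x n s {..<n} - welfare \<sigma> \<beta> K m x n s ({..<n} - {i}) =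
      (\<Sum>j<m. user_welfare \<beta> K {..<n} (relv \<sigma> n s (x j)) n - user_welfare \<beta> K ({..<n} - {i}) (relv \<sigma> n s (x j)) n)"
    unfolding welfare_def by (simp add: sum_subtractf)
  also have "\<dots> \<le> (\<Sum>j<m. user_util \<beta> K {..<n} (relv \<sigma> n s (x j)) n i / c_const \<beta> K)"
    using each by (intro sum_mono) auto
  also have "\<dots> = utility \<sigma> \<beta> K m x n s i / c_const \<beta> K"
    unfolding utility_def by (simp add: sum_divide_distrib)
  finally show ?thesis .
qed


end
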